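(* Let $n=2^\ell$, let $S=\{u_1,\dots,u_m\}\subseteq\mathbb{F}_2^d\setminus\{0\}$ be a set of $m$ distinct nonzero vectors, let $h:\mathbb{F}_2^d\to\mathbb{F}_2^\ell$ be a uniformly random linear map, fix $y\in\mathbb{F}_2^\ell$, let $Z_y:=|\{i:h(u_i)=y\}|$ and $\lambda:=m/n$. Then for every integer $a\ge1$, \[ \Pr[Z_y>2^a-2]\le\gamma^{-1}\lambda^a2^{-a^2}, \] where $\gamma:=\prod_{j=1}^\infty(1-2^{-j})$.
   Context: A uniformly random linear map is chosen uniformly among all linear maps $\mathbb{F}_2^d\to\mathbb{F}_2^\ell$. *)

theory Defs
  imports "HOL-Analysis.Analysis" "HOL-Library.Z2"
begin

text \<open>Vectors of F_2^d, represented as functions nat => bit vanishing at indices >= d.\<close>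
definition f2vecs :: "nat \<Rightarrow> (nat \<Rightarrow> bit) set" where
  "f2vecs d = {v. \<forall>i\<ge>d. v i = 0}"

text \<open>Linear maps F_2^d -> F_2^l, made extensional (value 0 outside F_2^d) so the set is finite.\<close>
definition f2_linear_maps :: "nat \<Rightarrow> nat \<Rightarrow> ((nat \<Rightarrow> bit) \<Rightarrow> (nat \<Rightarrow> bit)) set" where
  "f2_linear_maps d l = {h.
     (\<forall>x\<in>f2vecs d. h x \<in> f2vecs l) \<and>
     (\<forall>x\<in>f2vecs d. \<forall>y\<in>f2vecs d. h (\<lambda>i. x i + y i) = (\<lambda>i. h x i + h y i)) \<and>
     (\<forall>c::bit. \<forall>x\<in>f2vecs d. h (\<lambda>i. c * x i) = (\<lambda>i. c * h x i)) \<and>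
     (\<forall>x. x \<notin> f2vecs d \<longrightarrow> h x = (\<lambda>_. 0))}"

definition gamma2 :: real where
  "gamma2 = (\<Prod>j. 1 - (1/2) ^ Suc j)"

end

theory Submission
  imports Defs "HOL-Library.Function_Algebras"
begin

lemma bit_UNIV: "(UNIV::bit set) = {0,1}"
  by (auto intro: bit.exhaust)

lemma finite_bit_UNIV[simp]: "finite (UNIV::bit set)"
  by (simp add: bit_UNIV)

lemma card_bit_UNIV: "card (UNIV::bit set) = 2"
  by (simp add: bit_UNIV)

declare mult_bit_eq_and[simp del] add_bit_eq_xor[simp del]

interpretation F: vector_space "\<lambda>(c::bit) (x::nat\<Rightarrow>bit). (\<lambda>i. c * x i)"
  by unfold_locales (auto simp: fun_eq_iff algebra_simps)

lemma finite_f2vecs: "finite (f2vecs d)"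
proof -
  have "f2vecs d \<subseteq> {f. \<forall>x. (x \<in> {..<d} \<longrightarrow> f x \<in> UNIV) \<and> (x \<notin> {..<d} \<longrightarrow> f x = 0)}"
    by (auto simp: f2vecs_def)
  then show ?thesis
    by (rule finite_subset) (intro finite_set_of_finite_funs, auto simp: bit_UNIV)
qed

lemma card_f2vecs: "card (f2vecs l) = 2 ^ l"
proof (induction l)
  case 0
  have "f2vecs 0 = {\<lambda>_. 0}" by (auto simp: f2vecs_def)
  then show ?case by simp
next
  case (Suc l)
  have eq: "f2vecs (Suc l) = f2vecs l \<union> (\<lambda>v. v(l:=1)) ` f2vecs l"
  proof
    show "f2vecs (Suc l) \<subseteq> f2vecs l \<union> (\<lambda>v. v(l:=1)) ` f2vecs l"
    proof
      fix v assume v: "v \<in> f2vecs (Suc l)"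
      show "v \<in> f2vecs l \<union> (\<lambda>v. v(l:=1)) ` f2vecs l"
      proof (cases "v l = 0")
        case True
        then have "v \<in> f2vecs l" using v unfolding f2vecs_def
          by (auto simp: f2vecs_def) (metis Suc_leI le_neq_implies_less)
        then show ?thesis by simp
      next
        case False
        then have "v l = 1" by simp
        have "v(l:=0) \<in> f2vecs l" using v by (auto simp: f2vecs_def le_Suc_eq)
        moreover have "v = (v(l:=0))(l:=1)" using \<open>v l = 1\<close> by auto
        ultimately show ?thesis by blast
      qed
    qed
  qed (auto simp: f2vecs_def)
  have disj: "f2vecs l \<inter> (\<lambda>v. v(l:=1)) ` f2vecs l = {}"
    by (auto simp: f2vecs_def)
  have inj: "inj_on (\<lambda>v. v(l:=1)) (f2vecs l)"
    by (auto simp: inj_on_def f2vecs_def fun_eq_iff) (metis order_refl)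
  have "card (f2vecs (Suc l)) = card (f2vecs l) + card ((\<lambda>v. v(l:=1)) ` f2vecs l)"
    unfolding eq by (rule card_Un_disjoint) (auto simp: finite_f2vecs disj)
  also have "\<dots> = 2 ^ Suc l" using Suc card_image[OF inj] by simp
  finally show ?case .
qed

lemma subspace_f2vecs: "F.subspace (f2vecs l)"
  unfolding F.subspace_def by (auto simp: f2vecs_def zero_fun_def plus_fun_def)

lemma finite_L: "finite (f2_linear_maps d l)"
proof -
  have "f2_linear_maps d l \<subseteq> {f. \<forall>x. (x \<in> f2vecs d \<longrightarrow> f x \<in> f2vecs l) \<and> (x \<notin> f2vecs d \<longrightarrow> f x = (\<lambda>_. 0))}"
    by (auto simp: f2_linear_maps_def)
  then show ?thesis
    by (rule finite_subset) (intro finite_set_of_finite_funs finite_f2vecs)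
qed

lemma card_span_le: "finite B \<Longrightarrow> card (F.span B) \<le> 2 ^ card B"
proof -
  assume fB: "finite B"
  let ?g = "\<lambda>u. \<Sum>v\<in>B. (\<lambda>i. u v * v i)"
  have spB: "F.span B = ?g ` (B \<rightarrow>\<^sub>E UNIV)"
  proof -
    have "F.span B = range ?g" by (rule F.span_finite[OF fB])
    also have "\<dots> = ?g ` (B \<rightarrow>\<^sub>E UNIV)"
    proof
      show "range ?g \<subseteq> ?g ` (B \<rightarrow>\<^sub>E UNIV)"
      proof
        fix x assume "x \<in> range ?g"
        then obtain u where x: "x = ?g u" by auto
        have "x = ?g (restrict u B)" unfolding x by (intro sum.cong) auto
        moreover have "restrict u B \<in> B \<rightarrow>\<^sub>E UNIV" by simp
        ultimately show "x \<in> ?g ` (B \<rightarrow>\<^sub>E UNIV)" by blast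
      qed
    qed auto
    finally show ?thesis .
  qed
  have "card (F.span B) \<le> card (B \<rightarrow>\<^sub>E (UNIV::bit set))"
    unfolding spB by (rule card_image_le) (simp add: fB finite_PiE)
  also have "\<dots> = 2 ^ card B" using fB by (simp add: card_PiE card_bit_UNIV)
  finally show ?thesis .
qed

definition Ptup :: "(nat \<Rightarrow> nat \<Rightarrow> bit) \<Rightarrow> nat \<Rightarrow> nat set \<Rightarrow> (nat \<Rightarrow> nat) set" where
  "Ptup u k T = {f \<in> {..<k} \<rightarrow>\<^sub>E T. inj_on f {..<k} \<and> F.independent ((u \<circ> f) ` {..<k})}"

lemma count_in_span:
  assumes inj: "inj_on u {..<m}" and nz: "\<forall>i<m. u i \<noteq> (\<lambda>_. 0)"
    and T: "T \<subseteq> {..<m}" and fS: "finite S" and cS: "card S \<le> k"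
  shows "card {i\<in>T. u i \<in> F.span S} \<le> 2 ^ k - 1"
proof -
  have sub: "u ` {i\<in>T. u i \<in> F.span S} \<subseteq> F.span S - {0}"
    using nz T by (auto simp: zero_fun_def)
  have injT: "inj_on u {i\<in>T. u i \<in> F.span S}"
    using inj T by (auto intro: inj_on_subset)
  have fsp: "finite (F.span S)"
  proof -
    have "card (F.span S) \<le> 2 ^ card S" by (rule card_span_le[OF fS])
    have "F.span S = (\<lambda>u. \<Sum>v\<in>S. (\<lambda>i. u v * v i)) ` (S \<rightarrow>\<^sub>E UNIV)"
    proof -
      have "F.span S = range (\<lambda>u. \<Sum>v\<in>S. (\<lambda>i. u v * v i))" by (rule F.span_finite[OF fS])
      also have "\<dots> \<subseteq> (\<lambda>u. \<Sum>v\<in>S. (\<lambda>i. u v * v i)) ` (S \<rightarrow>\<^sub>E UNIV)"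
      proof
        fix x assume "x \<in> range (\<lambda>u. \<Sum>v\<in>S. (\<lambda>i. u v * v i))"
        then obtain w where x: "x = (\<Sum>v\<in>S. (\<lambda>i. w v * v i))" by auto
        have "x = (\<lambda>u. \<Sum>v\<in>S. (\<lambda>i. u v * v i)) (restrict w S)" unfolding x by (intro sum.cong) auto
        moreover have "restrict w S \<in> S \<rightarrow>\<^sub>E UNIV" by simp
        ultimately show "x \<in> (\<lambda>u. \<Sum>v\<in>S. (\<lambda>i. u v * v i)) ` (S \<rightarrow>\<^sub>E UNIV)" by blast
      qed
      finally have "F.span S \<subseteq> (\<lambda>u. \<Sum>v\<in>S. (\<lambda>i. u v * v i)) ` (S \<rightarrow>\<^sub>E UNIV)" .
      moreover have "(\<lambda>u. \<Sum>v\<in>S. (\<lambda>i. u v * v i)) ` (S \<rightarrow>\<^sub>E UNIV) \<subseteq> F.span S"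
        using F.span_finite[OF fS] by auto
      ultimately show ?thesis by blast
    qed
    then show ?thesis using fS by (simp add: finite_PiE)
  qed
  have "card {i\<in>T. u i \<in> F.span S} = card (u ` {i\<in>T. u i \<in> F.span S})"
    using card_image[OF injT] by simp
  also have "\<dots> \<le> card (F.span S - {0})"
    by (rule card_mono) (use fsp sub in auto)
  also have "\<dots> = card (F.span S) - 1"
    using fsp F.span_zero by (simp add: card_Diff_singleton)
  also have "\<dots> \<le> 2 ^ card S - 1"
    using card_span_le[OF fS] by simp
  also have "\<dots> \<le> 2 ^ k - 1"
    using cS by (simp add: diff_le_mono power_increasing)
  finally show ?thesis .
qed

lemma count_lower:
  assumes inj: "inj_on u {..<m}" and nz: "\<forall>i<m. u i \<noteq> (\<lambda>_. 0)"
    and T: "T \<subseteq> {..<m}" and cT: "2 ^ a - 1 \<le> card T"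
  shows "k \<le> a \<Longrightarrow> (\<Prod>j<k. (2::nat) ^ a - 2 ^ j) \<le> card (Ptup u k T)"
proof (induction k)
  case 0
  have "Ptup u 0 T = {\<lambda>_. undefined}" by (auto simp: Ptup_def F.independent_empty)
  then show ?case by simp
next
  case (Suc k)
  then have ka: "k < a" by simp
  have finT: "finite T" using T finite_subset by blast
  have finP: "finite (Ptup u k T)"
    by (rule finite_subset[of _ "{..<k} \<rightarrow>\<^sub>E T"]) (auto simp: Ptup_def finite_PiE finT)
  define C where "C f = {i\<in>T. u i \<notin> F.span ((u \<circ> f) ` {..<k})}" for f
  have Cbig: "2 ^ a - 2 ^ k \<le> card (C f)" for f
  proof -
    have "card {i\<in>T. u i \<in> F.span ((u \<circ> f) ` {..<k})} \<le> 2 ^ k - 1"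
      by (rule count_in_span[OF inj nz T]) (auto intro: card_image_le[THEN order_trans])
    moreover have "card T = card {i\<in>T. u i \<in> F.span ((u \<circ> f) ` {..<k})} + card (C f)"
      unfolding C_def using finT
      by (subst card_Un_disjoint[symmetric]) (auto intro: arg_cong[where f=card])
    moreover have "(2::nat) ^ k \<le> 2 ^ a" using ka by (simp add: power_increasing)
    moreover have "(1::nat) \<le> 2 ^ k" by simp
    ultimately show ?thesis using cT by linarith
  qed
  let ?S = "Sigma (Ptup u k T) C"
  let ?phi = "\<lambda>(f, i). f(k := i)"
  have finS: "finite ?S"
    using finP finT by (auto simp: C_def intro!: finite_SigmaI)
  have "card (Ptup u k T) * (2 ^ a - 2 ^ k) \<le> card ?S"
  proof -
    have "card (Ptup u k T) * (2 ^ a - 2 ^ k) = (\<Sum>f\<in>Ptup u k T. 2 ^ a - 2 ^ k)" by simp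
    also have "\<dots> \<le> (\<Sum>f\<in>Ptup u k T. card (C f))" by (rule sum_mono) (rule Cbig)
    also have "\<dots> = card ?S" using finP finT by (simp add: card_SigmaI C_def)
    finally show ?thesis .
  qed
  also have "card ?S = card (?phi ` ?S)"
  proof (rule card_image[symmetric], rule inj_onI)
    fix p q assume p: "p \<in> ?S" and q: "q \<in> ?S" and e: "?phi p = ?phi q"
    obtain f i where [simp]: "p = (f, i)" by (cases p)
    obtain g j where [simp]: "q = (g, j)" by (cases q)
    have f: "f \<in> {..<k} \<rightarrow>\<^sub>E T" and g: "g \<in> {..<k} \<rightarrow>\<^sub>E T" using p q by (auto simp: Ptup_def)
    from e have "i = j" by (metis case_prod_conv fun_upd_same \<open>p = (f, i)\<close> \<open>q = (g, j)\<close>)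
    moreover have "f = g"
    proof
      fix x show "f x = g x"
      proof (cases "x = k")
        case True then show ?thesis using f g by (auto simp: PiE_def extensional_def)
      next
        case False then show ?thesis using e by (auto dest: fun_cong[where x=x])
      qed
    qed
    ultimately show "p = q" by simp
  qed
  also have "card (?phi ` ?S) \<le> card (Ptup u (Suc k) T)"
  proof (rule card_mono)
    show "finite (Ptup u (Suc k) T)"
      by (rule finite_subset[of _ "{..<Suc k} \<rightarrow>\<^sub>E T"]) (auto simp: Ptup_def finite_PiE finT)
    show "?phi ` ?S \<subseteq> Ptup u (Suc k) T"
    proof clarify
      fix f i assume f: "f \<in> Ptup u k T" and i: "i \<in> C f"
      have fP: "f \<in> {..<k} \<rightarrow>\<^sub>E T" and finj: "inj_on f {..<k}"
        and find: "F.independent ((u \<circ> f) ` {..<k})" using f by (auto simp: Ptup_def)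
      have iT: "i \<in> T" and isp: "u i \<notin> F.span ((u \<circ> f) ` {..<k})" using i by (auto simp: C_def)
      have ni: "i \<notin> f ` {..<k}"
        using isp F.span_base by fastforce
      have lt: "{..<Suc k} = insert k {..<k}" by auto
      have img: "(u \<circ> f(k := i)) ` {..<Suc k} = insert (u i) ((u \<circ> f) ` {..<k})"
        unfolding lt by auto
      have "f(k := i) \<in> {..<Suc k} \<rightarrow>\<^sub>E T"
        using fP iT by (auto simp: PiE_def extensional_def less_Suc_eq)
      moreover have "inj_on (f(k := i)) {..<Suc k}"
        unfolding lt using finj ni by (auto simp: inj_on_def)
      moreover have "F.independent ((u \<circ> f(k := i)) ` {..<Suc k})"
        unfolding img using find isp F.span_base
        by (auto simp: F.independent_insert)
      ultimately show "f(k := i) \<in> Ptup u (Suc k) T" by (simp add: Ptup_def)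
    qed
  qed
  finally have A1: "card (Ptup u k T) * (2 ^ a - 2 ^ k) \<le> card (Ptup u (Suc k) T)" .
  have "(\<Prod>j<k. (2::nat) ^ a - 2 ^ j) \<le> card (Ptup u k T)" using Suc by simp
  then have "(\<Prod>j<k. (2::nat) ^ a - 2 ^ j) * (2 ^ a - 2 ^ k) \<le> card (Ptup u k T) * (2 ^ a - 2 ^ k)"
    by (rule mult_le_mono1)
  from order_trans[OF this A1] show ?case by (simp add: prod.lessThan_Suc)
qed

interpretation FF: vector_space_pair "\<lambda>(c::bit) (x::nat\<Rightarrow>bit). (\<lambda>i. c * x i)" "\<lambda>(c::bit) (x::nat\<Rightarrow>bit). (\<lambda>i. c * x i)"
  by unfold_locales

lemma f2vecs_add: "x \<in> f2vecs d \<Longrightarrow> y \<in> f2vecs d \<Longrightarrow> (\<lambda>i. x i + y i) \<in> f2vecs d"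
  by (auto simp: f2vecs_def)

lemma f2vecs_scale: "x \<in> f2vecs d \<Longrightarrow> (\<lambda>i. c * x i) \<in> f2vecs d"
  by (auto simp: f2vecs_def)

lemma exists_lin:
  assumes ind: "F.independent B" and Bd: "B \<subseteq> f2vecs d" and G: "G ` B \<subseteq> f2vecs l"
  shows "\<exists>g\<in>f2_linear_maps d l. \<forall>b\<in>B. g b = G b"
proof -
  define g where "g x = (if x \<in> f2vecs d then FF.construct B G x else (\<lambda>_. 0))" for x
  interpret lin: Vector_Spaces.linear "\<lambda>(c::bit) (x::nat\<Rightarrow>bit). (\<lambda>i. c * x i)" "\<lambda>(c::bit) (x::nat\<Rightarrow>bit). (\<lambda>i. c * x i)" "FF.construct B G"
    by (rule FF.linear_construct[OF ind])
  have sp: "FF.construct B G x \<in> f2vecs l" for x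
    using FF.construct_in_span[OF ind, of G x] F.span_minimal[OF G subspace_f2vecs] by auto
  have "g \<in> f2_linear_maps d l"
    unfolding f2_linear_maps_def
  proof (intro CollectI conjI ballI allI impI)
    fix x assume "x \<in> f2vecs d" then show "g x \<in> f2vecs l" using sp by (simp add: g_def)
  next
    fix x y assume x: "x \<in> f2vecs d" and y: "y \<in> f2vecs d"
    have "FF.construct B G (x + y) = FF.construct B G x + FF.construct B G y" by (rule lin.add)
    then show "g (\<lambda>i. x i + y i) = (\<lambda>i. g x i + g y i)"
      using x y f2vecs_add[OF x y] by (simp add: g_def plus_fun_def)
  next
    fix c :: bit and x assume x: "x \<in> f2vecs d"
    have "FF.construct B G (\<lambda>i. c * x i) = (\<lambda>i. c * FF.construct B G x i)" by (rule lin.scale)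
    then show "g (\<lambda>i. c * x i) = (\<lambda>i. c * g x i)"
      using x f2vecs_scale[OF x] by (simp add: g_def)
  next
    fix x assume "x \<notin> f2vecs d" then show "g x = (\<lambda>_. 0)" by (simp add: g_def)
  qed
  moreover have "\<forall>b\<in>B. g b = G b"
    using Bd by (auto simp: g_def FF.construct_basis[OF ind])
  ultimately show ?thesis by blast
qed

lemma L_add:
  assumes "h \<in> f2_linear_maps d l" "g \<in> f2_linear_maps d l"
  shows "(\<lambda>x i. h x i + g x i) \<in> f2_linear_maps d l"
  unfolding f2_linear_maps_def
proof (intro CollectI conjI ballI allI impI)
  have h: "h \<in> f2_linear_maps d l" and g: "g \<in> f2_linear_maps d l" by fact+
  fix x assume x: "x \<in> f2vecs d"
  then show "(\<lambda>i. h x i + g x i) \<in> f2vecs l"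
    using h g f2vecs_add unfolding f2_linear_maps_def by blast
next
  have h: "h \<in> f2_linear_maps d l" and g: "g \<in> f2_linear_maps d l" by fact+
  fix x y assume x: "x \<in> f2vecs d" and y: "y \<in> f2vecs d"
  have "h (\<lambda>i. x i + y i) = (\<lambda>i. h x i + h y i)" "g (\<lambda>i. x i + y i) = (\<lambda>i. g x i + g y i)"
    using h g x y unfolding f2_linear_maps_def by blast+
  then show "(\<lambda>i. h (\<lambda>i. x i + y i) i + g (\<lambda>i. x i + y i) i) = (\<lambda>i. (h x i + g x i) + (h y i + g y i))"
    by (simp add: ac_simps)
next
  have h: "h \<in> f2_linear_maps d l" and g: "g \<in> f2_linear_maps d l" by fact+
  fix c :: bit and x assume x: "x \<in> f2vecs d"
  have "h (\<lambda>i. c * x i) = (\<lambda>i. c * h x i)" "g (\<lambda>i. c * x i) = (\<lambda>i. c * g x i)"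
    using h g x unfolding f2_linear_maps_def by blast+
  then show "(\<lambda>i. h (\<lambda>i. c * x i) i + g (\<lambda>i. c * x i) i) = (\<lambda>i. c * (h x i + g x i))"
    by (simp add: distrib_left)
next
  have h: "h \<in> f2_linear_maps d l" and g: "g \<in> f2_linear_maps d l" by fact+
  fix x assume x: "x \<notin> f2vecs d"
  have "h x = (\<lambda>_. 0)" "g x = (\<lambda>_. 0)"
    using h g x unfolding f2_linear_maps_def by blast+
  then show "(\<lambda>i. h x i + g x i) = (\<lambda>_. 0)" by simp
qed

lemma fiber_bound:
  assumes injf: "inj_on f {..<a}" and fP: "f \<in> {..<a} \<rightarrow>\<^sub>E {..<m}"
    and ind: "F.independent ((u \<circ> f) ` {..<a})"
    and ud: "\<forall>i<m. u i \<in> f2vecs d" and y: "y \<in> f2vecs l" and inju: "inj_on u {..<m}"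
  shows "card {h \<in> f2_linear_maps d l. \<forall>j<a. h (u (f j)) = y} * 2 ^ (l * a) \<le> card (f2_linear_maps d l)"
proof -
  let ?L = "f2_linear_maps d l"
  let ?Fib = "{h \<in> ?L. \<forall>j<a. h (u (f j)) = y}"
  let ?W = "{..<a} \<rightarrow>\<^sub>E f2vecs l"
  let ?B = "(u \<circ> f) ` {..<a}"
  have injuf: "inj_on (u \<circ> f) {..<a}"
    using injf inju fP by (auto intro!: comp_inj_on inj_on_subset[OF inju])
  have Bd: "?B \<subseteq> f2vecs d" using fP ud by auto
  have "\<exists>g\<in>?L. \<forall>j<a. g (u (f j)) = w j" if w: "w \<in> ?W" for w
  proof -
    define G where "G b = w (inv_into {..<a} (u \<circ> f) b)" for b
    have Gj: "G (u (f j)) = w j" if "j < a" for j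
      unfolding G_def using inv_into_f_f[OF injuf, of j] that by simp
    have G: "G ` ?B \<subseteq> f2vecs l"
    proof
      fix z assume "z \<in> G ` ?B"
      then obtain j where j: "j < a" and z: "z = G (u (f j))" by auto
      show "z \<in> f2vecs l" unfolding z Gj[OF j] using w j by (auto simp: PiE_def Pi_def)
    qed
    obtain g where g: "g \<in> ?L" "\<forall>b\<in>?B. g b = G b"
      using exists_lin[OF ind Bd G] by blast
    have "\<forall>j<a. g (u (f j)) = w j"
      using g(2) Gj by auto
    with g(1) show ?thesis by blast
  qed
  then have ex: "\<forall>w\<in>?W. \<exists>g. g \<in> ?L \<and> (\<forall>j<a. g (u (f j)) = w j)" by blast
  obtain gw where gw0: "\<forall>w\<in>?W. gw w \<in> ?L \<and> (\<forall>j<a. gw w (u (f j)) = w j)"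
    using bchoice[OF ex] by blast
  have gw: "gw w \<in> ?L \<and> (\<forall>j<a. gw w (u (f j)) = w j)" if "w \<in> ?W" for w
    using gw0 that by blast
  let ?Phi = "\<lambda>(h, w). (\<lambda>x i. h x i + gw w x i)"
  have "inj_on ?Phi (?Fib \<times> ?W)"
  proof (rule inj_onI, clarify)
    fix h w h' w'
    assume h: "h \<in> ?L" "\<forall>j<a. h (u (f j)) = y" and w: "w \<in> ?W"
      and h': "h' \<in> ?L" "\<forall>j<a. h' (u (f j)) = y" and w': "w' \<in> ?W"
      and e: "(\<lambda>x i. h x i + gw w x i) = (\<lambda>x i. h' x i + gw w' x i)"
    have ww: "w = w'"
    proof
      fix j show "w j = w' j"
      proof (cases "j < a")
        case True
        have "(\<lambda>i. h (u (f j)) i + gw w (u (f j)) i) = (\<lambda>i. h' (u (f j)) i + gw w' (u (f j)) i)"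
          using e by (rule fun_cong)
        then show ?thesis using True h h' gw[OF w] gw[OF w'] by (auto simp: fun_eq_iff)
      next
        case False then show ?thesis using w w' by (auto simp: PiE_def extensional_def)
      qed
    qed
    have "h = h'"
      using e unfolding ww by (auto simp: fun_eq_iff)
    with ww show "h = h' \<and> w = w'" by simp
  qed
  moreover have "?Phi ` (?Fib \<times> ?W) \<subseteq> ?L"
  proof clarify
    fix h w assume "h \<in> ?L" "\<forall>j<a. h (u (f j)) = y" "w \<in> ?W"
    then show "(\<lambda>x i. h x i + gw w x i) \<in> ?L" using gw by (intro L_add) auto
  qed
  ultimately have "card (?Fib \<times> ?W) \<le> card ?L"
    by (rule card_inj_on_le[OF _ _ finite_L])
  moreover have "card ?W = 2 ^ (l * a)"
    by (simp add: card_PiE card_f2vecs power_mult)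
  ultimately show ?thesis by (simp add: card_cartesian_product)
qed

lemma gamma_conv: "convergent_prod (\<lambda>j. 1 - (1/2::real) ^ Suc j)"
proof -
  have "summable (\<lambda>i. (1/2::real) * (1/2) ^ i)"
    by (intro summable_mult summable_geometric) simp
  then have "summable (\<lambda>i. norm ((1 - (1/2::real) ^ Suc i) - 1))"
    by simp
  then show ?thesis
    by (intro abs_convergent_prod_imp_convergent_prod summable_imp_abs_convergent_prod)
qed

lemma gamma_lim: "(\<lambda>n. \<Prod>i\<le>n. 1 - (1/2::real) ^ Suc i) \<longlonglongrightarrow> gamma2"
  unfolding gamma2_def by (rule convergent_prod_LIMSEQ[OF gamma_conv])

lemma factor_bounds: "0 < 1 - (1/2::real) ^ Suc i" "1 - (1/2::real) ^ Suc i \<le> 1"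
proof -
  have "(1/2::real) ^ i \<le> 1" by (rule power_le_one) auto
  then have "(1/2::real) ^ Suc i \<le> 1/2" by simp
  then show "0 < 1 - (1/2::real) ^ Suc i" by simp
  show "1 - (1/2::real) ^ Suc i \<le> 1" by simp
qed

lemma factor_nonneg: "0 \<le> 1 - (1/2::real) ^ Suc i"
  using factor_bounds(1)[of i] by linarith

lemma pprod_nonneg: "0 \<le> (\<Prod>i\<le>n. 1 - (1/2::real) ^ Suc i)"
  by (rule prod_nonneg) (rule factor_nonneg)

lemma gamma_pos: "0 < gamma2"
proof -
  have "gamma2 \<noteq> 0"
    unfolding gamma2_def
  proof (rule prodinf_nonzero[OF gamma_conv])
    fix i show "1 - (1/2::real) ^ Suc i \<noteq> 0" using factor_bounds(1)[of i] by linarith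
  qed
  moreover have "0 \<le> gamma2"
    by (rule LIMSEQ_le_const[OF gamma_lim]) (use pprod_nonneg in blast)
  ultimately show ?thesis by simp
qed

lemma gamma_le: "gamma2 \<le> (\<Prod>i\<le>n. 1 - (1/2::real) ^ Suc i)"
proof (rule decseq_ge[OF _ gamma_lim])
  show "decseq (\<lambda>n. \<Prod>i\<le>n. 1 - (1/2::real) ^ Suc i)"
  proof (rule decseq_SucI)
    fix n
    note pprod_nonneg[of n]
    then show "(\<Prod>i\<le>Suc n. 1 - (1/2::real) ^ Suc i) \<le> (\<Prod>i\<le>n. 1 - (1/2::real) ^ Suc i)"
      using factor_bounds(2)[of "Suc n"] by (simp add: mult_left_le)
  qed
qed

lemma prod_identity:
  "real (\<Prod>j<a. (2::nat) ^ a - 2 ^ j) = 2 ^ (a * a) * (\<Prod>k<a. 1 - (1/2::real) ^ Suc k)"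
proof -
  have "real (\<Prod>j<a. (2::nat) ^ a - 2 ^ j) = (\<Prod>j<a. 2 ^ a * (1 - (1/2::real) ^ (a - j)))"
    unfolding of_nat_prod
  proof (rule prod.cong[OF refl])
    fix j assume "j \<in> {..<a}"
    then have j: "j < a" by simp
    then have le: "(2::nat) ^ j \<le> 2 ^ a" by (simp add: power_increasing)
    have "(2::real) ^ a * (1/2) ^ (a - j) = 2 ^ j"
    proof -
      have "(2::real) ^ a = 2 ^ j * 2 ^ (a - j)" using j by (simp flip: power_add)
      then show ?thesis by (simp add: power_one_over)
    qed
    then show "real (2 ^ a - 2 ^ j) = 2 ^ a * (1 - (1/2::real) ^ (a - j))"
      using le by (simp add: of_nat_diff right_diff_distrib)
  qed
  also have "\<dots> = (2 ^ a) ^ a * (\<Prod>j<a. 1 - (1/2::real) ^ (a - j))"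
    by (simp add: prod.distrib)
  also have "(\<Prod>j<a. 1 - (1/2::real) ^ (a - j)) = (\<Prod>k<a. 1 - (1/2::real) ^ Suc k)"
  proof -
    have "(\<Prod>j<a. 1 - (1/2::real) ^ (a - j)) = (\<Prod>k<a. 1 - (1/2::real) ^ (a - (a - Suc k)))"
      by (rule prod.nat_diff_reindex[symmetric])
    also have "\<dots> = (\<Prod>k<a. 1 - (1/2::real) ^ Suc k)"
      by (rule prod.cong) (auto simp: Suc_diff_Suc)
    finally show ?thesis .
  qed
  finally show ?thesis by (simp add: power_mult)
qed

lemma double_count:
  assumes "finite A" "finite B"
  shows "(\<Sum>x\<in>A. card {y\<in>B. R x y}) = (\<Sum>y\<in>B. card {x\<in>A. R x y})"
proof -
  have c1: "card {y\<in>B. R x y} = (\<Sum>y\<in>B. if R x y then 1 else 0)" for x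
    using sum.inter_filter[OF assms(2), of "\<lambda>_. 1::nat" "R x"] by simp
  have c2: "card {x\<in>A. R x y} = (\<Sum>x\<in>A. if R x y then 1 else 0)" for y
    using sum.inter_filter[OF assms(1), of "\<lambda>_. 1::nat" "\<lambda>x. R x y"] by simp
  have "(\<Sum>x\<in>A. card {y\<in>B. R x y}) = (\<Sum>x\<in>A. \<Sum>y\<in>B. if R x y then 1 else 0)"
    by (simp only: c1)
  also have "\<dots> = (\<Sum>y\<in>B. \<Sum>x\<in>A. if R x y then 1 else 0)" by (rule sum.swap)
  also have "\<dots> = (\<Sum>y\<in>B. card {x\<in>A. R x y})"
    by (simp only: c2)
  finally show ?thesis .
qed

theorem corollaryB2:
  fixes d l m :: nat and u :: "nat \<Rightarrow> (nat \<Rightarrow> bit)" and y :: "nat \<Rightarrow> bit" and a :: nat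
  assumes "inj_on u {..<m}"
    and "\<forall>i<m. u i \<in> f2vecs d \<and> u i \<noteq> (\<lambda>_. 0)"
    and "y \<in> f2vecs l"
    and "a \<ge> 1"
  shows "real (card {h \<in> f2_linear_maps d l. real (card {i. i < m \<and> h (u i) = y}) > 2 ^ a - 2})
           / real (card (f2_linear_maps d l))
         \<le> (1 / gamma2) * (real m / 2 ^ l) ^ a * (1 / 2 ^ (a^2))"
proof -
  note inju = assms(1)
  have ud: "\<forall>i<m. u i \<in> f2vecs d" and nz: "\<forall>i<m. u i \<noteq> (\<lambda>_. 0)" using assms(2) by auto
  let ?L = "f2_linear_maps d l"
  define Q where "Q h f = (\<forall>j<a. h (u (f j)) = y)" for h :: "(nat \<Rightarrow> bit) \<Rightarrow> nat \<Rightarrow> bit" and f :: "nat \<Rightarrow> nat"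
  define PA where "PA = Ptup u a {..<m}"
  define E where "E = {h \<in> ?L. real (card {i. i < m \<and> h (u i) = y}) > 2 ^ a - 2}"
  define c where "c = (\<Prod>j<a. (2::nat) ^ a - 2 ^ j)"
  have finL: "finite ?L" by (rule finite_L)
  have finPA: "finite PA"
    by (rule finite_subset[of _ "{..<a} \<rightarrow>\<^sub>E {..<m}"]) (auto simp: PA_def Ptup_def finite_PiE)
  have cardPA: "card PA \<le> m ^ a"
  proof -
    have "card PA \<le> card ({..<a} \<rightarrow>\<^sub>E {..<m})"
      by (rule card_mono) (auto simp: PA_def Ptup_def finite_PiE)
    also have "\<dots> = m ^ a" by (simp add: card_PiE)
    finally show ?thesis .
  qed
  have EL: "E \<subseteq> ?L" by (auto simp: E_def)
  have step1: "c \<le> card {f \<in> PA. Q h f}" if hE: "h \<in> E" for h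
  proof -
    define T where "T = {i. i < m \<and> h (u i) = y}"
    have T: "T \<subseteq> {..<m}" by (auto simp: T_def)
    have "(2::real) ^ a < real (card T + 2)" using hE by (simp add: E_def T_def)
    then have "(2::nat) ^ a < card T + 2" by (metis of_nat_less_iff of_nat_numeral of_nat_power)
    then have cT: "2 ^ a - 1 \<le> card T" by simp
    have "c \<le> card (Ptup u a T)"
      unfolding c_def by (rule count_lower[OF inju nz T cT]) simp
    also have "Ptup u a T = {f \<in> PA. Q h f}"
      by (auto simp: Ptup_def PA_def Q_def T_def PiE_def Pi_def)
    finally show ?thesis .
  qed
  have "card E * c = (\<Sum>h\<in>E. c)" by simp
  also have "\<dots> \<le> (\<Sum>h\<in>E. card {f \<in> PA. Q h f})"
    by (rule sum_mono) (rule step1)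
  also have "\<dots> \<le> (\<Sum>h\<in>?L. card {f \<in> PA. Q h f})"
    by (rule sum_mono2[OF finL EL]) simp
  also have "\<dots> = (\<Sum>f\<in>PA. card {h \<in> ?L. Q h f})"
    by (rule double_count[OF finL finPA])
  finally have s2: "card E * c \<le> (\<Sum>f\<in>PA. card {h \<in> ?L. Q h f})" .
  have "(\<Sum>f\<in>PA. card {h \<in> ?L. Q h f}) * 2 ^ (l * a) = (\<Sum>f\<in>PA. card {h \<in> ?L. Q h f} * 2 ^ (l * a))"
    by (simp add: sum_distrib_right)
  also have "\<dots> \<le> (\<Sum>f\<in>PA. card ?L)"
  proof (rule sum_mono)
    fix f assume "f \<in> PA"
    then have "inj_on f {..<a}" "f \<in> {..<a} \<rightarrow>\<^sub>E {..<m}" "F.independent ((u \<circ> f) ` {..<a})"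
      by (auto simp: PA_def Ptup_def)
    from fiber_bound[OF this ud assms(3) inju]
    show "card {h \<in> ?L. Q h f} * 2 ^ (l * a) \<le> card ?L" by (simp add: Q_def)
  qed
  also have "\<dots> = card PA * card ?L" by simp
  also have "\<dots> \<le> m ^ a * card ?L" using cardPA by simp
  finally have main: "card E * c * 2 ^ (l * a) \<le> m ^ a * card ?L"
    using s2 by (meson le_trans mult_le_mono1)
  have "(\<lambda>_. \<lambda>_. 0) \<in> ?L" by (auto simp: f2_linear_maps_def f2vecs_def)
  then have Lpos: "0 < card ?L" using finL card_gt_0_iff by blast
  have gc: "gamma2 * 2 ^ (a * a) \<le> real c"
  proof -
    have "{..a - 1} = {..<a}" using assms(4) by auto
    then have "gamma2 \<le> (\<Prod>k<a. 1 - (1/2::real) ^ Suc k)" using gamma_le[of "a - 1"] by simp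
    then show ?thesis unfolding c_def prod_identity by (simp add: mult.commute)
  qed
  have gp: "0 < gamma2" by (rule gamma_pos)
  have cpos: "0 < real c" using gc gp by (smt (verit) mult_pos_pos zero_less_power)
  have mainr: "real (card E) * real c * 2 ^ (l * a) \<le> real m ^ a * real (card ?L)"
    using main by (metis of_nat_le_iff of_nat_mult of_nat_power of_nat_numeral)
  have "real (card E) / real (card ?L) \<le> real m ^ a / (real c * 2 ^ (l * a))"
    using mainr Lpos cpos by (simp add: divide_simps mult_ac)
  also have "\<dots> \<le> real m ^ a / (gamma2 * 2 ^ (a * a) * 2 ^ (l * a))"
    by (rule divide_left_mono) (use gc gp cpos in \<open>auto intro!: mult_pos_pos mult_right_mono\<close>)
  also have "\<dots> = (1 / gamma2) * (real m / 2 ^ l) ^ a * (1 / 2 ^ (a^2))"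
  proof -
    have e1: "(2::real) ^ (l * a) = (2 ^ l) ^ a" by (simp add: power_mult)
    have e2: "(2::real) ^ (a^2) = 2 ^ (a * a)" by (simp add: power2_eq_square)
    show ?thesis unfolding e1 e2 power_divide by simp
  qed
  finally show ?thesis by (simp add: E_def)
qed

end
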